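(* For $0<q<1$: (1) $$\sum_{r,k\ge1}\frac{q^{(2r-1)(2k-1)}}{2r-1}=\frac{\alpha}{16}\,{}_2F_1\left[\left.\begin{matrix}1,1\\2\end{matrix}\right|\alpha\right]\;\Big(=-\tfrac1{16}\log(1-\alpha)\Big);$$ (2) $$\sum_{r,k\ge1}\frac{q^{2(r-1/2)(k-1/2)}}{2r-1}=\frac{\alpha^{1/2}}{4}\,{}_2F_1\left[\left.\begin{matrix}\tfrac12,1\\ \tfrac32\end{matrix}\right|\alpha\right],$$ where $\alpha=\alpha(q)$.
   Context: $\theta_2(q)=\sum_{n\in\mathbb Z}q^{(n+1/2)^2}$, $\theta_3(q)=\sum_{n\in\mathbb Z}q^{n^2}$, and $\alpha(q)=\theta_2^4(q)/\theta_3^4(q)$, which lies in $(0,1)$ for $0<q<1$. ${}_2F_1\left[\begin{matrix}a,b\\c\end{matrix}\middle| z\right]=\sum_{n\ge0}\frac{(a)_n(b)_n}{(c)_n}\frac{z^n}{n!}$ with $(a)_n=\Gamma(a+n)/\Gamma(a)$. *)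

theory Defs
  imports "HOL-Analysis.Analysis"
begin

definition theta2 :: "real \<Rightarrow> real" where
  "theta2 q = (\<Sum>\<^sub>\<infinity>n\<in>(UNIV::int set). q powr ((real_of_int n + 1/2)^2))"

definition theta3 :: "real \<Rightarrow> real" where
  "theta3 q = (\<Sum>\<^sub>\<infinity>n\<in>(UNIV::int set). q powr ((real_of_int n)^2))"

definition alpha :: "real \<Rightarrow> real" where
  "alpha q = theta2 q ^ 4 / theta3 q ^ 4"

definition hyp2F1 :: "real \<Rightarrow> real \<Rightarrow> real \<Rightarrow> real \<Rightarrow> real" where
  "hyp2F1 a b c z =
     (\<Sum>n. pochhammer a n * pochhammer b n / pochhammer c n * z ^ n / fact n)"

end

theory Submission
  imports Defs
begin


lemma has_sum_prod_real:
  fixes f g :: "_ \<Rightarrow> real"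
  assumes f: "(f has_sum a) A" and g: "(g has_sum b) B"
  shows "((\<lambda>(x,y). f x * g y) has_sum (a*b)) (A \<times> B)"
proof -
  have fs: "(\<lambda>x. norm (f x)) summable_on A" using f summable_on_iff_abs_summable_on_real has_sum_imp_summable by blast
  have gs: "(\<lambda>x. norm (g x)) summable_on B" using g summable_on_iff_abs_summable_on_real has_sum_imp_summable by blast
  have "(\<lambda>z. norm ((\<lambda>(x,y). f x * g y) z)) summable_on (A \<times> B)"
  proof (rule iffD2[OF Infinite_Sum.abs_summable_on_Sigma_iff], intro conjI ballI)
    fix x assume "x \<in> A"
    show "(\<lambda>y. norm ((\<lambda>(x,y). f x * g y) (x, y))) summable_on B"
      using summable_on_cmult_right[OF gs, of "norm (f x)"] by (simp add: abs_mult)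
  next
    have eq: "\<And>x. (\<Sum>\<^sub>\<infinity>y\<in>B. norm ((\<lambda>(x,y). f x * g y) (x, y))) = norm (f x) * (\<Sum>\<^sub>\<infinity>y\<in>B. norm (g y))"
      by (simp add: abs_mult infsum_cmult_right')
    moreover have "(\<lambda>x. norm (norm (f x) * (\<Sum>\<^sub>\<infinity>y\<in>B. norm (g y)))) summable_on A"
      using summable_on_cmult_left[OF fs, of "(\<Sum>\<^sub>\<infinity>y\<in>B. norm (g y))"] by (simp add: norm_mult infsum_nonneg)
    ultimately show "(\<lambda>x. norm (\<Sum>\<^sub>\<infinity>y\<in>B. norm ((\<lambda>(x,y). f x * g y) (x, y)))) summable_on A" by (simp only: eq)
  qed
  hence sm: "(\<lambda>(x,y). f x * g y) summable_on (A \<times> B)" using summable_on_iff_abs_summable_on_real by blast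
  show ?thesis
    apply (rule has_sum_SigmaI[where g="\<lambda>x. f x * b"])
    using has_sum_cmult_right[OF g] has_sum_cmult_left[OF f] sm by auto
qed



lemma summable_int_halves:
  fixes f :: "int \<Rightarrow> real"
  assumes "(\<lambda>n::nat. f (int n)) summable_on UNIV" "(\<lambda>n::nat. f (- int n)) summable_on UNIV"
  shows "f summable_on UNIV"
proof -
  have 1: "f summable_on range int"
    using summable_on_reindex[of int UNIV f] assms(1) by (simp add: o_def)
  have 2: "f summable_on range (\<lambda>n::nat. - int n)"
    using summable_on_reindex[of "\<lambda>n::nat. - int n" UNIV f] assms(2) by (simp add: o_def inj_on_def)
  have "x \<in> range int \<union> range (\<lambda>n::nat. - int n)" for x :: int
    by (cases "x \<ge> 0") (auto intro: image_eqI[of _ _ "nat x"] image_eqI[of _ _ "nat (-x)"])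
  hence "range int \<union> range (\<lambda>n::nat. - int n) = UNIV" by auto
  thus ?thesis using summable_on_union[OF 1 2] by simp
qed

lemma sq_bound:
  fixes n :: int and c :: real
  assumes "\<bar>c\<bar> \<le> 1/2"
  shows "(real_of_int n + c)^2 \<ge> real_of_int \<bar>n\<bar> - 1"
proof (cases "n = 0")
  case True
  have "0 \<le> (real_of_int n + c)^2" by simp
  moreover have "real_of_int \<bar>n\<bar> - 1 \<le> 0" using True by simp
  ultimately show ?thesis by linarith
next
  case False
  hence "\<bar>real_of_int n\<bar> \<ge> 1" by linarith
  hence "\<bar>real_of_int n + c\<bar> \<ge> \<bar>real_of_int n\<bar> - 1/2" using assms by linarith
  moreover have "\<bar>real_of_int n\<bar> - 1/2 \<ge> 0" using \<open>\<bar>real_of_int n\<bar> \<ge> 1\<close> by linarith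
  ultimately have "(real_of_int n + c)^2 \<ge> (\<bar>real_of_int n\<bar> - 1/2)^2"
    by (metis abs_le_square_iff abs_of_nonneg)
  moreover have "(\<bar>real_of_int n\<bar> - 1/2)^2 \<ge> \<bar>real_of_int n\<bar> - 1"
    proof -
    have "(\<bar>real_of_int n\<bar> - 1/2)^2 - (\<bar>real_of_int n\<bar> - 1) = (\<bar>real_of_int n\<bar> - 1)^2 + 1/4"
      by (simp add: power2_eq_square algebra_simps)
    moreover have "(\<bar>real_of_int n\<bar> - 1)^2 \<ge> 0" by simp
    ultimately show ?thesis by linarith
  qed
  ultimately show ?thesis by simp
qed

lemma theta_summable:
  fixes q c :: real
  assumes q: "0 < q" "q < 1" and c: "\<bar>c\<bar> \<le> 1/2"
  shows "(\<lambda>n::int. q powr ((real_of_int n + c)^2)) summable_on UNIV"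
proof -
  have bnd: "q powr ((real_of_int n + c)^2) \<le> q ^ nat \<bar>n\<bar> / q" for n :: int
  proof -
    have "q powr ((real_of_int n + c)^2) \<le> q powr (real_of_int \<bar>n\<bar> - 1)"
      using sq_bound[OF c, of n] q by (intro powr_mono') auto
    also have "\<dots> = q powr (real (nat \<bar>n\<bar>)) / q" using q by (simp add: powr_diff)
    also have "\<dots> = q ^ nat \<bar>n\<bar> / q" using q powr_realpow[of q "nat \<bar>n\<bar>"] by simp
    finally show ?thesis .
  qed
  have geo: "(\<lambda>n::nat. q ^ n / q) summable_on UNIV"
  proof -
    have "summable (\<lambda>n::nat. q ^ n / q)" using q by (intro summable_divide summable_geometric) auto
    thus ?thesis using q by (subst summable_on_UNIV_nonneg_real_iff) auto
  qed
  show ?thesis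
  proof (rule summable_int_halves)
    show "(\<lambda>n::nat. q powr ((real_of_int (int n) + c)^2)) summable_on UNIV"
      by (rule summable_on_comparison_test[OF geo]) (use bnd[of "int _"] in auto)
    show "(\<lambda>n::nat. q powr ((real_of_int (- int n) + c)^2)) summable_on UNIV"
      by (rule summable_on_comparison_test[OF geo]) (use bnd[of "- int _"] in auto)
  qed
qed



definition th :: "real \<Rightarrow> real \<Rightarrow> real" where
  "th q c = (\<Sum>\<^sub>\<infinity>n\<in>(UNIV::int set). q powr ((real_of_int n + c)^2))"

definition sg :: "int \<Rightarrow> real" where "sg n = (if even n then 1 else -1)"

definition th4 :: "real \<Rightarrow> real" where
  "th4 q = (\<Sum>\<^sub>\<infinity>n\<in>(UNIV::int set). sg n * q powr ((real_of_int n)^2))"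

lemma sg_mult: "sg m * sg n = sg (m + n)" by (auto simp: sg_def)
lemma sg_abs: "\<bar>sg n\<bar> = 1" by (auto simp: sg_def)

lemma th_has_sum:
  assumes "0 < q" "q < 1" "\<bar>c\<bar> \<le> 1/2"
  shows "((\<lambda>n::int. q powr ((real_of_int n + c)^2)) has_sum th q c) UNIV"
  unfolding th_def using theta_summable[OF assms] by (rule has_sum_infsum)

lemma th0_has_sum:
  assumes "0 < q" "q < 1"
  shows "((\<lambda>n::int. q powr ((real_of_int n)^2)) has_sum th q 0) UNIV"
  using th_has_sum[OF assms, of 0] by simp

lemma th4_has_sum:
  assumes "0 < q" "q < 1"
  shows "((\<lambda>n::int. sg n * q powr ((real_of_int n)^2)) has_sum th4 q) UNIV"
proof -
  have "(\<lambda>n::int. q powr ((real_of_int n + 0)^2)) summable_on UNIV" using theta_summable[OF assms, of 0] by simp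
  hence "(\<lambda>n::int. norm (sg n * q powr ((real_of_int n)^2))) summable_on UNIV"
    by (simp add: abs_mult sg_abs)
  hence "(\<lambda>n::int. sg n * q powr ((real_of_int n)^2)) summable_on UNIV"
    using summable_on_iff_abs_summable_on_real by blast
  thus ?thesis unfolding th4_def by (rule has_sum_infsum)
qed

lemma theta3_th: "theta3 q = th q 0" by (simp add: theta3_def th_def)
lemma theta2_th: "theta2 q = th q (1/2)" by (simp add: theta2_def th_def)

lemma reidx_e: "((\<lambda>(a,b). F (a+b, a-b)) has_sum S1) UNIV = (F has_sum S1) {z::int\<times>int. even (fst z + snd z)}"
  by (rule has_sum_reindex_bij_witness[where i = "\<lambda>(m,n). ((m+n) div 2, (m-n) div 2)" and j = "\<lambda>(a,b). (a+b,a-b)"])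
   (auto simp: split_beta, presburger+)
lemma reidx_o1: "((\<lambda>(a,b). F (a+b+1, a-b)) has_sum S1) UNIV = (F has_sum S1) {z::int\<times>int. odd (fst z + snd z)}"
  by (rule has_sum_reindex_bij_witness[where i = "\<lambda>(m,n). ((m+n-1) div 2, (m-n-1) div 2)" and j = "\<lambda>(a,b). (a+b+1,a-b)"])
   (auto simp: split_beta, presburger+)
lemma reidx_o2: "((\<lambda>(a,b). F (a+b, a-b-1)) has_sum S1) UNIV = (F has_sum S1) {z::int\<times>int. odd (fst z + snd z)}"
  by (rule has_sum_reindex_bij_witness[where i = "\<lambda>(m,n). ((m+n+1) div 2, (m-n-1) div 2)" and j = "\<lambda>(a,b). (a+b,a-b-1)"])
   (auto simp: split_beta, presburger+)

lemma eo_union: "{z::int\<times>int. even (fst z + snd z)} \<union> {z. odd (fst z + snd z)} = UNIV" by auto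

lemma split_eo1:
  fixes F :: "int \<times> int \<Rightarrow> real"
  assumes "((\<lambda>(a,b). F (a+b, a-b)) has_sum S1) UNIV" "((\<lambda>(a,b). F (a+b+1, a-b)) has_sum S2) UNIV"
  shows "(F has_sum (S1+S2)) UNIV"
  using has_sum_Un_disjoint[OF assms(1)[unfolded reidx_e] assms(2)[unfolded reidx_o1]] eo_union by auto

lemma split_eo2:
  fixes F :: "int \<times> int \<Rightarrow> real"
  assumes "((\<lambda>(a,b). F (a+b, a-b)) has_sum S1) UNIV" "((\<lambda>(a,b). F (a+b, a-b-1)) has_sum S2) UNIV"
  shows "(F has_sum (S1+S2)) UNIV"
  using has_sum_Un_disjoint[OF assms(1)[unfolded reidx_e] assms(2)[unfolded reidx_o2]] eo_union by auto

lemma pw2: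
  fixes q x y u v :: real
  assumes "0 < q" "x + y = 2*(u+v)"
  shows "q powr x * q powr y = (q^2) powr u * (q^2) powr v"
proof -
  have q2: "q^2 = q powr 2" using assms(1) by (simp add: powr_numeral)
  have "(q^2) powr u = q powr (2 * u)" by (simp only: q2 powr_powr)
  moreover have "(q^2) powr v = q powr (2 * v)" by (simp only: q2 powr_powr)
  ultimately show ?thesis using assms by (simp add: powr_add[symmetric] algebra_simps)
qed



lemma hs_pair:
  fixes G :: "int \<times> int \<Rightarrow> real"
  assumes "(g1 has_sum s1) UNIV" "(g2 has_sum s2) UNIV" "\<And>a b. G (a,b) = g1 a * g2 b"
  shows "(G has_sum s1 * s2) UNIV"
proof -
  have "((\<lambda>(x,y). g1 x * g2 y) has_sum s1 * s2) (UNIV \<times> UNIV)" by (rule has_sum_prod_real[OF assms(1,2)])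
  also have "(\<lambda>(x,y). g1 x * g2 y) = G" using assms(3) by auto
  finally show ?thesis by simp
qed

lemma q2_facts: "0 < q \<Longrightarrow> q < 1 \<Longrightarrow> 0 < (q::real)^2 \<and> q^2 < 1"
  by (simp add: power_less_one_iff)

lemma dup1:
  assumes q: "0 < q" "q < 1"
  shows "th q 0 ^ 2 = th (q^2) 0 ^ 2 + th (q^2) (1/2) ^ 2"
proof -
  define F where "F = (\<lambda>(m,n). q powr ((real_of_int m)^2) * q powr ((real_of_int n)^2))"
  have Q: "0 < q^2" "q^2 < 1" using q2_facts[OF q] by auto
  have h: "(F has_sum th q 0 * th q 0) UNIV"
    by (rule hs_pair[OF th0_has_sum[OF q] th0_has_sum[OF q]]) (simp add: F_def)
  have e: "((\<lambda>(a,b). F (a+b, a-b)) has_sum th (q^2) 0 * th (q^2) 0) UNIV"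
    by (rule hs_pair[OF th0_has_sum[OF Q] th0_has_sum[OF Q]])
       (simp add: F_def, rule pw2[OF q(1)], simp add: algebra_simps power2_eq_square)
  have o: "((\<lambda>(a,b). F (a+b+1, a-b)) has_sum th (q^2) (1/2) * th (q^2) (1/2)) UNIV"
    by (rule hs_pair[OF th_has_sum[OF Q] th_has_sum[OF Q]])
       (simp_all add: F_def, rule pw2[OF q(1)], simp add: algebra_simps power2_eq_square)
  have "(F has_sum (th (q^2) 0 * th (q^2) 0 + th (q^2) (1/2) * th (q^2) (1/2))) UNIV"
    by (rule split_eo1[OF e o])
  from has_sum_unique[OF h this] show ?thesis by (simp add: power2_eq_square)
qed

lemma dup2:
  assumes q: "0 < q" "q < 1"
  shows "th4 q ^ 2 = th (q^2) 0 ^ 2 - th (q^2) (1/2) ^ 2"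
proof -
  define F where "F = (\<lambda>(m,n). sg m * q powr ((real_of_int m)^2) * (sg n * q powr ((real_of_int n)^2)))"
  have Q: "0 < q^2" "q^2 < 1" using q2_facts[OF q] by auto
  have h: "(F has_sum th4 q * th4 q) UNIV"
    by (rule hs_pair[OF th4_has_sum[OF q] th4_has_sum[OF q]]) (simp add: F_def)
  have sge: "sg (a+b) * sg (a-b) = 1" for a b
    unfolding sg_mult by (simp add: sg_def)
  have sgo: "sg (a+b+1) * sg (a-b) = -1" for a b
    unfolding sg_mult by (simp add: sg_def)
  have e: "((\<lambda>(a,b). F (a+b, a-b)) has_sum th (q^2) 0 * th (q^2) 0) UNIV"
  proof (rule hs_pair[OF th0_has_sum[OF Q] th0_has_sum[OF Q]])
    fix a b :: int
    have "F (a+b, a-b) = (sg (a+b) * sg (a-b)) * (q powr ((real_of_int (a+b))^2) * q powr ((real_of_int (a-b))^2))"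
      by (simp add: F_def)
    also have "\<dots> = (q^2) powr ((real_of_int a)^2) * (q^2) powr ((real_of_int b)^2)"
      unfolding sge by (simp, rule pw2[OF q(1)], simp add: algebra_simps power2_eq_square)
    finally show "(\<lambda>(a,b). F (a+b, a-b)) (a, b) = (q^2) powr ((real_of_int a)^2) * (q^2) powr ((real_of_int b)^2)" by simp
  qed
  have t: "((\<lambda>n. (q^2) powr ((real_of_int n + 1/2)^2)) has_sum th (q^2) (1/2)) UNIV"
    using th_has_sum[OF Q, of "1/2"] by simp
  have o: "((\<lambda>(a,b). F (a+b+1, a-b)) has_sum (- th (q^2) (1/2)) * th (q^2) (1/2)) UNIV"
  proof (rule hs_pair[OF has_sum_uminusI[OF t] t])
    fix a b :: int
    have "F (a+b+1, a-b) = (sg (a+b+1) * sg (a-b)) * (q powr ((real_of_int (a+b+1))^2) * q powr ((real_of_int (a-b))^2))"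
      by (simp add: F_def)
    also have "\<dots> = - ((q^2) powr ((real_of_int a + 1/2)^2) * (q^2) powr ((real_of_int b + 1/2)^2))"
      unfolding sgo by (simp, rule pw2[OF q(1)], simp add: algebra_simps power2_eq_square)
    finally show "(\<lambda>(a,b). F (a+b+1, a-b)) (a, b) = (- ((q^2) powr ((real_of_int a + 1/2)^2))) * (q^2) powr ((real_of_int b + 1/2)^2)" by simp
  qed
  have "(F has_sum (th (q^2) 0 * th (q^2) 0 + (- th (q^2) (1/2)) * th (q^2) (1/2))) UNIV"
    by (rule split_eo1[OF e o])
  from has_sum_unique[OF h this] show ?thesis by (simp add: power2_eq_square)
qed

lemma dup3:
  assumes q: "0 < q" "q < 1"
  shows "th q (1/2) ^ 2 = 2 * th (q^2) (1/2) * th (q^2) 0"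
proof -
  define F where "F = (\<lambda>(m,n). q powr ((real_of_int m + 1/2)^2) * q powr ((real_of_int n + 1/2)^2))"
  have Q: "0 < q^2" "q^2 < 1" using q2_facts[OF q] by auto
  have h: "(F has_sum th q (1/2) * th q (1/2)) UNIV"
    by (rule hs_pair[OF th_has_sum[OF q] th_has_sum[OF q]]) (auto simp add: F_def)
  have e: "((\<lambda>(a,b). F (a+b, a-b)) has_sum th (q^2) (1/2) * th (q^2) 0) UNIV"
    by (rule hs_pair[OF th_has_sum[OF Q] th0_has_sum[OF Q]])
       (simp_all add: F_def, rule pw2[OF q(1)], simp add: algebra_simps power2_eq_square)
  have o: "((\<lambda>(a,b). F (a+b, a-b-1)) has_sum th (q^2) 0 * th (q^2) (1/2)) UNIV"
    by (rule hs_pair[OF th0_has_sum[OF Q] th_has_sum[OF Q]])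
       (simp_all add: F_def, rule pw2[OF q(1)], simp add: algebra_simps power2_eq_square)
  have "(F has_sum (th (q^2) (1/2) * th (q^2) 0 + th (q^2) 0 * th (q^2) (1/2))) UNIV"
    by (rule split_eo2[OF e o])
  from has_sum_unique[OF h this] show ?thesis by (simp add: power2_eq_square)
qed



definition qp :: "real \<Rightarrow> nat \<Rightarrow> real" where "qp q m = (\<Prod>j\<in>{1..m}. 1 - q^(2*j))"
definition ca :: "real \<Rightarrow> nat \<Rightarrow> real" where "ca q m = q^(m^2) / qp q m"
definition EE :: "real \<Rightarrow> real \<Rightarrow> real" where "EE q x = (\<Sum>m. ca q m * x^m)"

context
  fixes q :: real
  assumes q: "0 < q" "q < 1"
begin

lemma qp_ge: "qp q m \<ge> (1 - q^2)^m"
proof (induction m)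
  case 0 thus ?case by (simp add: qp_def)
next
  case (Suc m)
  have qpS: "qp q (Suc m) = qp q m * (1 - q^(2*Suc m))" by (simp add: qp_def)
  have b: "1 - q^2 \<le> 1 - q^(2*Suc m)"
  proof -
    have "q^(2*Suc m) \<le> q^2" using q by (intro power_decreasing) auto
    thus ?thesis by simp
  qed
  have d: "0 \<le> 1 - q^2" using q by (simp add: power_le_one)
  have c: "0 \<le> (1 - q^2)^m" using d by simp
  have "(1-q^2)^m * (1-q^2) \<le> qp q m * (1 - q^(2*Suc m))"
    by (rule mult_mono[OF Suc.IH b]) (use c d Suc.IH in linarith)+
  thus ?case by (simp only: power_Suc2 qpS)
qed

lemma qp_pos: "qp q m > 0"
proof -
  have "(1 - q^2)^m > 0" using q by (simp add: power_less_one_iff)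
  thus ?thesis using qp_ge[of m] by linarith
qed

lemma ca_pos: "ca q m > 0" using qp_pos q by (simp add: ca_def)
lemma ca_0: "ca q 0 = 1" by (simp add: ca_def qp_def)

lemma ca_rec: "ca q (Suc m) * (1 - q^(2*Suc m)) = q^(2*m+1) * ca q m"
proof -
  have qpS: "qp q (Suc m) = qp q m * (1 - q^(2*Suc m))" by (simp add: qp_def)
  have ne: "1 - q^(2*Suc m) \<noteq> 0"
  proof -
    have "q^(2*Suc m) < 1" using q by (intro power_less_one_iff[THEN iffD2]) auto
    thus ?thesis by simp
  qed
  have "(Suc m)^2 = m^2 + (2*m+1)" by (simp add: power2_eq_square)
  hence "q^((Suc m)^2) = q^(m^2) * q^(2*m+1)" by (simp add: power_add)
  thus ?thesis using ne qp_pos[of m] by (simp add: ca_def qpS field_simps)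
qed

lemma ca_rec': "ca q (Suc m) = q^(2*m+1) * ca q m + q^(2*Suc m) * ca q (Suc m)"
  using ca_rec[of m] by (simp add: algebra_simps)


lemma ca_summable: "summable (\<lambda>m. ca q m * \<bar>x\<bar>^m)"
proof -
  define c where "c = \<bar>x\<bar> / (1 - q^2)"
  have q2: "0 < 1 - q^2" using q by (simp add: power_less_one_iff)
  have "(\<lambda>n. q^n * c) \<longlonglongrightarrow> 0 * c" using q by (intro tendsto_mult LIMSEQ_power_zero) auto
  hence "eventually (\<lambda>n. q^n * c < 1/2) sequentially" by (intro order_tendstoD) auto
  then obtain N where N: "\<And>n. n \<ge> N \<Longrightarrow> q^n * c < 1/2" by (auto simp: eventually_sequentially)
  show ?thesis
  proof (rule summable_comparison_test'[OF summable_geometric[of "1/2::real"]])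
    fix n assume "n \<ge> N"
    have c0: "c \<ge> 0" using q2 by (simp add: c_def)
    have "norm (ca q n * \<bar>x\<bar>^n) = q^(n^2) * \<bar>x\<bar>^n / qp q n" using ca_pos[of n] qp_pos[of n] q by (simp add: ca_def abs_mult)
    also have "\<dots> \<le> q^(n^2) * \<bar>x\<bar>^n / (1 - q^2)^n"
      using qp_ge[of n] qp_pos[of n] q q2 by (intro divide_left_mono mult_nonneg_nonneg mult_pos_pos zero_less_power) auto
    also have "\<dots> = (q^n * c)^n" by (simp add: c_def power_mult_distrib power_divide power2_eq_square power_mult)
    also have "\<dots> \<le> (1/2)^n" using N[OF \<open>n \<ge> N\<close>] q c0 by (intro power_mono) auto
    finally show "norm (ca q n * \<bar>x\<bar>^n) \<le> (1/2)^n" .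
  qed auto
qed

lemma ca_summable': "summable (\<lambda>m. norm (ca q m * x^m))"
  using ca_summable[of x] ca_pos by (simp add: abs_mult power_abs less_imp_le)

lemma ca_sums: "(\<lambda>m. ca q m * x^m) sums EE q x"
  unfolding EE_def by (intro summable_sums summable_norm_cancel[OF ca_summable'])

lemma ca_has_sum: "((\<lambda>m. ca q m * x^m) has_sum EE q x) UNIV"
  by (rule norm_summable_imp_has_sum[OF ca_summable' ca_sums])

lemma EE_rec: "EE q x = (1 + q*x) * EE q (q^2 * x)"
proof -
  have s1: "(\<lambda>m. ca q (Suc m) * (q^2*x)^(Suc m)) sums (EE q (q^2*x) - 1)"
    using ca_sums[of "q^2*x"] by (subst sums_Suc_iff) (simp add: ca_0)
  have s2: "(\<lambda>m. q*x * (ca q m * (q^2*x)^m)) sums (q*x * EE q (q^2*x))"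
    by (rule sums_mult[OF ca_sums])
  have eq: "ca q (Suc m) * (q^2*x)^(Suc m) + q*x * (ca q m * (q^2*x)^m) = ca q (Suc m) * x^(Suc m)" for m
  proof -
    have p1: "(q^2*x)^(Suc m) = q^(2*Suc m) * x^(Suc m)" by (simp only: power_mult_distrib power_mult)
    have p2: "(q^2*x)^m = q^(2*m) * x^m" by (simp only: power_mult_distrib power_mult)
    have p3: "q*x*(ca q m * (q^(2*m)*x^m)) = q^(2*m+1) * ca q m * x^(Suc m)" by (simp add: mult_ac)
    have "ca q (Suc m) * (q^2*x)^(Suc m) + q*x * (ca q m * (q^2*x)^m)
        = x^(Suc m) * (q^(2*Suc m) * ca q (Suc m) + q^(2*m+1) * ca q m)"
      unfolding p1 p2 p3 by (simp only: algebra_simps)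
    also have "q^(2*Suc m) * ca q (Suc m) + q^(2*m+1) * ca q m = ca q (Suc m)" using ca_rec'[of m] by linarith
    hence "x^(Suc m) * (q^(2*Suc m) * ca q (Suc m) + q^(2*m+1) * ca q m) = x^(Suc m) * ca q (Suc m)" by simp
    finally show ?thesis by simp
  qed
  have "(\<lambda>m. ca q (Suc m) * x^(Suc m)) sums (EE q (q^2*x) - 1 + q*x * EE q (q^2*x))"
    using sums_add[OF s1 s2] unfolding eq .
  hence "(\<lambda>m. ca q m * x^m) sums (EE q (q^2*x) - 1 + q*x * EE q (q^2*x) + 1)"
    by (subst (asm) sums_Suc_iff) (simp add: ca_0)
  from sums_unique2[OF ca_sums this] show ?thesis by (simp add: algebra_simps)
qed

lemma EE_prod: "EE q x = (\<Prod>n<N. 1 + q^(2*n+1) * x) * EE q (q^(2*N) * x)"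
proof (induction N)
  case 0 thus ?case by simp
next
  case (Suc N)
  have e: "q^2 * (q^(2*N) * x) = q^(2*Suc N) * x" by (simp add: power2_eq_square)
  have st: "EE q (q^(2*N)*x) = (1 + q * (q^(2*N) * x)) * EE q (q^(2*Suc N) * x)"
    using EE_rec[of "q^(2*N)*x"] by (simp only: e[symmetric])
  have e2: "q * (q^(2*N) * x) = q^(2*N+1) * x" by simp
  show ?case by (simp only: prod.lessThan_Suc Suc.IH st e2 mult.assoc)
qed


lemma EE_ge1: "x \<ge> 0 \<Longrightarrow> EE q x \<ge> 1"
proof -
  assume x: "x \<ge> 0"
  have "sum (\<lambda>m. ca q m * x^m) {..<1} \<le> EE q x"
    unfolding EE_def using ca_sums[of x] ca_pos x
    by (intro sum_le_suminf) (auto simp: sums_iff less_imp_le)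
  thus ?thesis by (simp add: ca_0)
qed

lemma EE_near1: "\<bar>y\<bar> \<le> 1 \<Longrightarrow> \<bar>EE q y - 1\<bar> \<le> \<bar>y\<bar> * EE q 1"
proof -
  assume y: "\<bar>y\<bar> \<le> 1"
  have s: "(\<lambda>m. ca q (Suc m) * y^(Suc m)) sums (EE q y - 1)"
    using ca_sums[of y] by (subst sums_Suc_iff) (simp add: ca_0)
  have s1: "(\<lambda>m. ca q (Suc m) * 1^(Suc m)) sums (EE q 1 - 1)"
    using ca_sums[of 1] by (subst sums_Suc_iff) (simp add: ca_0)
  have b: "norm (ca q (Suc m) * y^(Suc m)) \<le> \<bar>y\<bar> * ca q (Suc m)" for m
  proof -
    have "\<bar>y\<bar>^(Suc m) \<le> \<bar>y\<bar>" using y by (simp add: power_le_one mult_left_le)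
    thus ?thesis using ca_pos[of "Suc m"] by (simp add: abs_mult power_abs mult_right_mono mult.commute)
  qed
  have sg: "summable (\<lambda>m. \<bar>y\<bar> * ca q (Suc m))" using s1 by (intro summable_mult) (simp add: sums_iff)
  have sn: "summable (\<lambda>m. norm (ca q (Suc m) * y^(Suc m)))"
    by (rule summable_comparison_test[OF _ sg]) (use b in auto)
  have "norm (EE q y - 1) = norm (\<Sum>m. ca q (Suc m) * y^(Suc m))" using s by (simp add: sums_iff)
  also have "\<dots> \<le> (\<Sum>m. norm (ca q (Suc m) * y^(Suc m)))" by (rule summable_norm[OF sn])
  also have "\<dots> \<le> (\<Sum>m. \<bar>y\<bar> * ca q (Suc m))" by (rule suminf_le[OF b sn sg])
  also have "\<dots> = \<bar>y\<bar> * (EE q 1 - 1)" using s1 by (simp add: sums_iff suminf_mult)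
  also have "\<dots> \<le> \<bar>y\<bar> * EE q 1" by (simp add: mult_left_mono)
  finally show ?thesis by simp
qed

lemma EE_lim: "(\<lambda>N. EE q (q^(2*N) * x)) \<longlonglongrightarrow> 1"
proof -
  have z: "(\<lambda>N. q^(2*N) * x) \<longlonglongrightarrow> 0"
  proof -
    have "(\<lambda>N. (q^2)^N * x) \<longlonglongrightarrow> 0 * x" using q by (intro tendsto_mult LIMSEQ_power_zero) (auto simp: power_less_one_iff)
    thus ?thesis by (simp add: power_mult)
  qed
  hence za: "(\<lambda>N. \<bar>q^(2*N) * x\<bar> * EE q 1) \<longlonglongrightarrow> 0"
    using tendsto_mult[OF tendsto_rabs[OF z] tendsto_const[of "EE q 1"]] by simp
  have ev: "eventually (\<lambda>N. \<bar>q^(2*N) * x\<bar> \<le> 1) sequentially"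
    using order_tendstoD(2)[OF tendsto_rabs[OF z], of 1] by (auto elim: eventually_mono)
  have "(\<lambda>N. EE q (q^(2*N) * x) - 1) \<longlonglongrightarrow> 0"
    by (rule Lim_null_comparison[OF _ za]) (use ev EE_near1 in \<open>auto elim: eventually_mono\<close>)
  from tendsto_add[OF this tendsto_const[of 1]] show ?thesis by simp
qed

end


definition SS :: "real \<Rightarrow> nat \<Rightarrow> real" where "SS q k = (\<Sum>l. ca q (l+k) * ca q l)"
definition TT :: "real \<Rightarrow> nat \<Rightarrow> real" where "TT q k = (\<Sum>l. q^(2*l) * ca q (l+k) * ca q l)"

context
  fixes q :: real
  assumes q: "0 < q" "q < 1"
begin

lemma ca_le: "ca q m \<le> EE q 1"
proof -
  have "sum (\<lambda>m. ca q m * 1^m) {m} \<le> (\<Sum>m. ca q m * 1^m)"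
    using ca_sums[OF q, of 1] ca_pos[OF q] by (intro sum_le_suminf) (auto simp: sums_iff less_imp_le)
  thus ?thesis by (simp add: EE_def)
qed

lemma ca1_summable: "summable (\<lambda>l. ca q l)"
  using ca_sums[OF q, of 1] by (simp add: sums_iff)

lemma SS_summable: "summable (\<lambda>l. ca q (l+k) * ca q l)"
proof (rule summable_comparison_test[OF _ summable_mult[OF ca1_summable, of "EE q 1"]])
  show "\<exists>N. \<forall>n\<ge>N. norm (ca q (n+k) * ca q n) \<le> EE q 1 * ca q n"
    using ca_le ca_pos[OF q] by (auto simp: abs_mult abs_of_pos intro!: mult_right_mono less_imp_le)
qed

lemma TT_summable: "summable (\<lambda>l. q^(2*l) * ca q (l+k) * ca q l)"
proof (rule summable_comparison_test[OF _ SS_summable[of k]])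
  show "\<exists>N. \<forall>n\<ge>N. norm (q^(2*n) * ca q (n+k) * ca q n) \<le> ca q (n+k) * ca q n"
  proof (intro exI allI impI)
    fix n :: nat
    have "q^(2*n) \<le> 1" using q by (simp add: power_le_one)
    moreover have "0 \<le> ca q (n+k) * ca q n" using ca_pos[OF q] by (simp add: less_imp_le)
    ultimately show "norm (q^(2*n) * ca q (n+k) * ca q n) \<le> ca q (n+k) * ca q n"
      using q ca_pos[OF q] by (simp add: abs_mult abs_of_pos mult_left_le_one_le mult.assoc)
  qed
qed

lemma SS_A: "SS q (Suc k) = q^(2*k+1) * TT q k + q^(2*Suc k) * TT q (Suc k)"
proof -
  have t: "ca q (l + Suc k) * ca q l = q^(2*k+1) * (q^(2*l) * ca q (l+k) * ca q l) + q^(2*Suc k) * (q^(2*l) * ca q (l + Suc k) * ca q l)" for l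
  proof -
    have r: "ca q (Suc (l+k)) = q^(2*(l+k)+1) * ca q (l+k) + q^(2*Suc (l+k)) * ca q (Suc (l+k))"
      by (rule ca_rec'[OF q])
    have e1: "q^(2*(l+k)+1) = q^(2*k+1) * q^(2*l)" by (simp add: power_add[symmetric] algebra_simps)
    have e2: "q^(2*Suc (l+k)) = q^(2*Suc k) * q^(2*l)" by (simp add: power_add[symmetric] algebra_simps)
    have "ca q (l + Suc k) = q^(2*k+1) * q^(2*l) * ca q (l+k) + q^(2*Suc k) * q^(2*l) * ca q (l + Suc k)"
      using r unfolding e1 e2 by simp
    from arg_cong[OF this, of "\<lambda>z. z * ca q l"] show ?thesis by (simp add: algebra_simps)
  qed
  have "(\<lambda>l. q^(2*k+1) * (q^(2*l) * ca q (l+k) * ca q l) + q^(2*Suc k) * (q^(2*l) * ca q (l + Suc k) * ca q l))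
          sums (q^(2*k+1) * TT q k + q^(2*Suc k) * TT q (Suc k))"
    unfolding TT_def by (intro sums_add sums_mult summable_sums TT_summable)
  hence "(\<lambda>l. ca q (l + Suc k) * ca q l) sums (q^(2*k+1) * TT q k + q^(2*Suc k) * TT q (Suc k))"
    by (simp only: t)
  thus ?thesis unfolding SS_def by (simp add: sums_iff)
qed

lemma SS_B: "SS q k = TT q k + q * TT q (Suc k)"
proof -
  define f where "f l = (1 - q^(2*l)) * ca q (l+k) * ca q l" for l
  have fs: "f sums (SS q k - TT q k)"
  proof -
    have "(\<lambda>l. ca q (l+k) * ca q l - q^(2*l) * ca q (l+k) * ca q l) sums (SS q k - TT q k)"
      unfolding SS_def TT_def by (intro sums_diff summable_sums SS_summable TT_summable)
    thus ?thesis unfolding f_def by (simp add: algebra_simps)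
  qed
  have fS: "f (Suc l) = q * (q^(2*l) * ca q (l + Suc k) * ca q l)" for l
  proof -
    have "f (Suc l) = ca q (Suc l + k) * (ca q (Suc l) * (1 - q^(2*Suc l)))" by (simp add: f_def algebra_simps)
    also have "\<dots> = ca q (Suc l + k) * (q^(2*l+1) * ca q l)" by (simp only: ca_rec[OF q])
    also have "\<dots> = q * (q^(2*l) * ca q (l + Suc k) * ca q l)" by (simp add: algebra_simps)
    finally show ?thesis .
  qed
  have "(\<lambda>l. f (Suc l)) sums (q * TT q (Suc k))"
    unfolding fS TT_def by (intro sums_mult summable_sums TT_summable)
  hence "f sums (q * TT q (Suc k) + f 0)" by (simp add: sums_Suc_iff)
  hence "f sums (q * TT q (Suc k))" by (simp add: f_def)
  from sums_unique2[OF fs this] show ?thesis by simp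
qed

lemma SS_rec: "SS q (Suc k) = q^(2*k+1) * SS q k"
proof -
  have e: "q^(2*Suc k) = q^(2*k+1) * q" by simp
  have a: "SS q (Suc k) = q^(2*k+1) * TT q k + q^(2*Suc k) * TT q (Suc k)" by (rule SS_A)
  have b: "SS q k = TT q k + q * TT q (Suc k)" by (rule SS_B)
  show ?thesis unfolding a b e by (simp add: algebra_simps)
qed

lemma SS_closed: "SS q k = q^(k^2) * SS q 0"
proof (induction k)
  case 0 thus ?case by simp
next
  case (Suc k)
  have "(Suc k)^2 = k^2 + (2*k+1)" by (simp add: power2_eq_square)
  thus ?case using Suc by (simp add: SS_rec power_add)
qed

lemma SS0_pos: "SS q 0 \<ge> 1"
proof -
  have "sum (\<lambda>l. ca q (l+0) * ca q l) {0} \<le> (\<Sum>l. ca q (l+0) * ca q l)"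
    using SS_summable[of 0] ca_pos[OF q] by (intro sum_le_suminf) (auto intro: less_imp_le)
  thus ?thesis by (simp add: SS_def ca_0[OF q])
qed

end


lemma pow_powr_int: "0 < q \<Longrightarrow> q^((nat \<bar>k\<bar>)^2) = q powr ((real_of_int k)^2)"
proof -
  assume q: "0 < q"
  have "real ((nat \<bar>k\<bar>)^2) = (real_of_int k)^2" by simp
  thus ?thesis using powr_realpow[OF q, of "(nat \<bar>k\<bar>)^2"] by simp
qed

lemma sg_pow: "(-1::real)^(nat \<bar>k\<bar>) = sg k"
  by (auto simp: sg_def even_nat_iff)

lemma reidx_Zn: "((\<lambda>(k::int,l::nat). G (l + nat k, l + nat (-k))) has_sum s) UNIV \<longleftrightarrow> (G has_sum s) UNIV"
    by (rule has_sum_reindex_bij_witness[where i="\<lambda>(m,l). (int m - int l, min m l)"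
          and j="\<lambda>(k,l). (l + nat k, l + nat (-k))"]) (auto simp: split_beta)

context
  fixes q :: real
  assumes q: "0 < q" "q < 1"
begin

lemma SS_has_sum: "((\<lambda>l. ca q (l+k) * ca q l) has_sum SS q k) UNIV"
  unfolding SS_def using SS_summable[OF q, of k] ca_pos[OF q]
  by (intro norm_summable_imp_has_sum summable_sums) (auto simp: abs_mult abs_of_pos)

lemma inner_has_sum: "((\<lambda>l. ca q (l + nat k) * ca q (l + nat (-k))) has_sum SS q (nat \<bar>k\<bar>)) UNIV"
proof (cases "k \<ge> 0")
  case True
  thus ?thesis using SS_has_sum[of "nat k"] by simp
next
  case False
  hence "nat k = 0" "nat \<bar>k\<bar> = nat (-k)" by auto
  thus ?thesis using SS_has_sum[of "nat (-k)"] by (simp add: mult.commute)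
qed

lemma EE_sq_gen:
  assumes x: "x^2 = (1::real)"
  shows "((\<lambda>k::int. x^(nat \<bar>k\<bar>) * SS q (nat \<bar>k\<bar>)) has_sum EE q x * EE q x) UNIV"
proof -
  define G where "G = (\<lambda>(m::nat,l::nat). ca q m * x^m * (ca q l * x^l))"
  have h: "(G has_sum EE q x * EE q x) UNIV"
    using has_sum_prod_real[OF ca_has_sum[OF q, of x] ca_has_sum[OF q, of x]] by (simp add: G_def)
  have h2: "((\<lambda>(k::int,l::nat). G (l + nat k, l + nat (-k))) has_sum EE q x * EE q x) UNIV"
    using h reidx_Zn by blast
  have xx: "x^(2*l) = 1" for l by (simp add: power_mult x)
  have inner: "((\<lambda>l. G (l + nat k, l + nat (-k))) has_sum x^(nat \<bar>k\<bar>) * SS q (nat \<bar>k\<bar>)) UNIV" for k :: int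
  proof -
    have e: "G (l + nat k, l + nat (-k)) = x^(nat \<bar>k\<bar>) * (ca q (l + nat k) * ca q (l + nat (-k)))" for l
    proof -
      have "x^(l + nat k) * x^(l + nat (-k)) = x^(2*l) * x^(nat \<bar>k\<bar>)"
        by (cases "k \<ge> 0") (simp_all add: power_add[symmetric] mult_2 add_ac)
      thus ?thesis unfolding G_def xx by (simp add: algebra_simps)
    qed
    show ?thesis unfolding e by (rule has_sum_cmult_right[OF inner_has_sum])
  qed
  show ?thesis
  proof -
    have h3: "((\<lambda>(k,l). G (l + nat k, l + nat (-k))) has_sum EE q x * EE q x) (Sigma (UNIV::int set) (\<lambda>_. UNIV::nat set))"
      using h2 by simp
    show ?thesis by (rule has_sum_SigmaD[OF h3]) (use inner in simp)
  qed
qed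

lemma EE1_sq: "EE q 1 * EE q 1 = SS q 0 * th q 0"
proof -
  have a: "((\<lambda>k::int. SS q (nat \<bar>k\<bar>)) has_sum EE q 1 * EE q 1) UNIV" using EE_sq_gen[of 1] by simp
  have b: "((\<lambda>k::int. SS q 0 * q powr ((real_of_int k)^2)) has_sum SS q 0 * th q 0) UNIV"
    by (rule has_sum_cmult_right[OF th0_has_sum[OF q]])
  have "(\<lambda>k::int. SS q (nat \<bar>k\<bar>)) = (\<lambda>k::int. SS q 0 * q powr ((real_of_int k)^2))"
  proof
    fix k :: int
    show "SS q (nat \<bar>k\<bar>) = SS q 0 * q powr ((real_of_int k)^2)"
      using SS_closed[OF q, of "nat \<bar>k\<bar>"] pow_powr_int[OF q(1), of k] by (simp add: mult.commute)
  qed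
  thus ?thesis using has_sum_unique[OF a] b by simp
qed

lemma EEm1_sq: "EE q (-1) * EE q (-1) = SS q 0 * th4 q"
proof -
  have a: "((\<lambda>k::int. (-1)^(nat \<bar>k\<bar>) * SS q (nat \<bar>k\<bar>)) has_sum EE q (-1) * EE q (-1)) UNIV" using EE_sq_gen[of "-1"] by simp
  have b: "((\<lambda>k::int. SS q 0 * (sg k * q powr ((real_of_int k)^2))) has_sum SS q 0 * th4 q) UNIV"
    by (rule has_sum_cmult_right[OF th4_has_sum[OF q]])
  have "(\<lambda>k::int. (-1)^(nat \<bar>k\<bar>) * SS q (nat \<bar>k\<bar>)) = (\<lambda>k::int. SS q 0 * (sg k * q powr ((real_of_int k)^2)))"
  proof
    fix k :: int
    show "(-1)^(nat \<bar>k\<bar>) * SS q (nat \<bar>k\<bar>) = SS q 0 * (sg k * q powr ((real_of_int k)^2))"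
      using SS_closed[OF q, of "nat \<bar>k\<bar>"] pow_powr_int[OF q(1), of k] sg_pow[of k] by (simp add: mult_ac)
  qed
  thus ?thesis using has_sum_unique[OF a] b by simp
qed

end


lemma artanh_sums:
  fixes y :: real
  assumes "0 \<le> y" "y < 1"
  shows "(\<lambda>j. y^(2*j+1) / real (2*j+1)) sums ((ln (1+y) - ln (1-y)) / 2)"
proof -
  define x where "x = (1+y)/(1-y)"
  have x: "x > 0" using assms by (simp add: x_def)
  have e: "(x - 1) / (x + 1) = y" using assms by (simp add: x_def field_simps)
  have l: "ln x = ln (1+y) - ln (1-y)" using assms by (simp add: x_def ln_div)
  have "(\<lambda>j. 2 * y^(2*j+1) / real (2*j+1)) sums (ln (1+y) - ln (1-y))"
    using ln_series_quadratic[OF x] unfolding e l by simp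
  from sums_divide[OF this, of 2]
  have "(\<lambda>j. 2 * y^(2*j+1) / real (2*j+1) / 2) sums ((ln (1+y) - ln (1-y)) / 2)" .
  moreover have "(\<lambda>j. 2 * y^(2*j+1) / real (2*j+1) / 2) = (\<lambda>j. y^(2*j+1) / real (2*j+1))"
    by (auto simp: fun_eq_iff field_simps)
  ultimately show ?thesis by simp
qed

context
  fixes q :: real
  assumes q: "0 < q" "q < 1"
begin

lemma Pm_pos: "(\<Prod>n<N. 1 + q^(2*n+1) * (-1)) > 0"
proof (rule prod_pos)
  fix n assume "n \<in> {..<N}"
  have "q^(2*n+1) < 1" using q by (intro power_less_one_iff[THEN iffD2]) auto
  thus "0 < 1 + q^(2*n+1) * (-1)" by simp
qed

lemma P1_pos: "(\<Prod>n<N. 1 + q^(2*n+1) * 1) > 0"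
  using q by (intro prod_pos) (simp add: add_pos_nonneg)

lemma EEm1_pos: "EE q (-1) > 0"
proof -
  have "eventually (\<lambda>N. EE q (q^(2*N) * (-1)) > 0) sequentially"
    using order_tendstoD(1)[OF EE_lim[OF q, of "-1"], of 0] by simp
  then obtain N where N: "EE q (q^(2*N) * (-1)) > 0" by (auto simp: eventually_sequentially)
  have "EE q (-1) = (\<Prod>n<N. 1 + q^(2*n+1) * (-1)) * EE q (q^(2*N) * (-1))" by (rule EE_prod[OF q])
  thus ?thesis using N Pm_pos[of N] by simp
qed

lemma EE1_pos: "EE q 1 > 0" using EE_ge1[OF q, of 1] by simp

lemma EEm_tail_pos: "EE q (q^(2*N) * (-1)) > 0"
proof -
  have "EE q (-1) = (\<Prod>n<N. 1 + q^(2*n+1) * (-1)) * EE q (q^(2*N) * (-1))" by (rule EE_prod[OF q])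
  thus ?thesis using EEm1_pos Pm_pos[of N] by (simp add: zero_less_mult_iff)
qed

lemma EE1_tail_pos: "EE q (q^(2*N) * 1) > 0"
  using EE_ge1[OF q, of "q^(2*N) * 1"] q by simp

lemma log_sums:
  "(\<lambda>n. ln (1 + q^(2*n+1)) - ln (1 - q^(2*n+1))) sums (ln (EE q 1) - ln (EE q (-1)))"
proof -
  have ps: "(\<Sum>n<N. ln (1 + q^(2*n+1)) - ln (1 - q^(2*n+1)))
        = (ln (EE q 1) - ln (EE q (-1))) - (ln (EE q (q^(2*N) * 1)) - ln (EE q (q^(2*N) * (-1))))" for N
  proof -
    have f1: "ln (\<Prod>n<N. 1 + q^(2*n+1) * 1) = (\<Sum>n<N. ln (1 + q^(2*n+1)))"
    proof (subst ln_prod)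
      show "\<And>n. n \<in> {..<N} \<Longrightarrow> 1 + q^(2*n+1) * 1 \<noteq> 0"
      proof -
        fix n
        have "q^(2*n+1) > 0" using q by simp
        thus "1 + q^(2*n+1) * 1 \<noteq> 0" by simp
      qed
    qed auto
    have f2: "ln (\<Prod>n<N. 1 + q^(2*n+1) * (-1)) = (\<Sum>n<N. ln (1 - q^(2*n+1)))"
    proof (subst ln_prod)
      show "\<And>n. n \<in> {..<N} \<Longrightarrow> 1 + q^(2*n+1) * (-1) \<noteq> 0"
      proof -
        fix n
        have "q^(2*n+1) < 1" using q by (intro power_less_one_iff[THEN iffD2]) auto
        thus "1 + q^(2*n+1) * (-1) \<noteq> 0" by simp
      qed
    qed auto
    have g1: "ln (EE q 1) = ln (\<Prod>n<N. 1 + q^(2*n+1) * 1) + ln (EE q (q^(2*N) * 1))"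
      using EE_prod[OF q, of 1 N] ln_mult_pos[OF P1_pos[of N] EE1_tail_pos[of N]] by (simp only:)
    have g2: "ln (EE q (-1)) = ln (\<Prod>n<N. 1 + q^(2*n+1) * (-1)) + ln (EE q (q^(2*N) * (-1)))"
      using EE_prod[OF q, of "-1" N] ln_mult_pos[OF Pm_pos[of N] EEm_tail_pos[of N]] by (simp only:)
    show ?thesis unfolding g1 g2 f1 f2 sum_subtractf by simp
  qed
  have l1: "(\<lambda>N. ln (EE q (q^(2*N) * 1))) \<longlonglongrightarrow> ln 1" by (rule tendsto_ln[OF EE_lim[OF q]]) simp
  have l2: "(\<lambda>N. ln (EE q (q^(2*N) * (-1)))) \<longlonglongrightarrow> ln 1" by (rule tendsto_ln[OF EE_lim[OF q]]) simp
  have "(\<lambda>N. (ln (EE q 1) - ln (EE q (-1))) - (ln (EE q (q^(2*N) * 1)) - ln (EE q (q^(2*N) * (-1)))))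
          \<longlonglongrightarrow> (ln (EE q 1) - ln (EE q (-1))) - (ln 1 - ln 1)"
    by (intro tendsto_diff tendsto_const l1 l2)
  thus ?thesis unfolding sums_def ps by simp
qed

end


lemma DS:
  fixes t :: real
  assumes t: "0 < t" "t < 1"
  shows "((\<lambda>(r::nat,k::nat). t^((2*r-1)*(2*k-1)) / real (2*r-1)) has_sum ((ln (EE t 1) - ln (EE t (-1)))/2)) ({1..}\<times>{1..})"
proof -
  define f where "f = (\<lambda>(n::nat,j::nat). (t^(2*n+1))^(2*j+1) / real (2*j+1))"
  define g where "g n = (ln (1 + t^(2*n+1)) - ln (1 - t^(2*n+1))) / 2" for n
  have y: "0 \<le> t^(2*n+1)" "t^(2*n+1) < 1" for n
  proof -
    show "0 \<le> t^(2*n+1)" using t by simp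
    show "t^(2*n+1) < 1" using t by (intro power_less_one_iff[THEN iffD2]) auto
  qed
  have inner: "((\<lambda>j. f (n, j)) has_sum g n) UNIV" for n
    unfolding f_def g_def using artanh_sums[OF y(1)[of n] y(2)[of n]] y(1)[of n]
    by (intro sums_nonneg_imp_has_sum) auto
  have gnn: "g n \<ge> 0" for n
  proof -
    have "ln (1 + t^(2*n+1)) \<ge> 0" using y(1)[of n] by simp
    moreover have "ln (1 - t^(2*n+1)) \<le> 0" using y[of n] by simp
    ultimately show ?thesis by (simp add: g_def)
  qed
  have outer: "(g has_sum ((ln (EE t 1) - ln (EE t (-1)))/2)) UNIV"
  proof (rule sums_nonneg_imp_has_sum)
    show "g sums ((ln (EE t 1) - ln (EE t (-1)))/2)" unfolding g_def by (intro sums_divide log_sums[OF t])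
  qed (use gnn in auto)
  have sm: "f summable_on Sigma UNIV (\<lambda>_. UNIV)"
    by (rule summable_on_SigmaI[OF inner has_sum_imp_summable[OF outer]]) (use t in \<open>auto simp: f_def\<close>)
  have "(f has_sum ((ln (EE t 1) - ln (EE t (-1)))/2)) (Sigma UNIV (\<lambda>_. UNIV))"
    by (rule has_sum_SigmaI[OF inner outer sm])
  hence fh: "(f has_sum ((ln (EE t 1) - ln (EE t (-1)))/2)) UNIV" by simp
  have pe: "t^((2*(j+1)-1)*(2*(n+1)-1)) / real (2*(j+1)-1) = (t^(2*n+1))^(2*j+1) / real (2*j+1)" for n j :: nat
  proof -
    have "(2*(j+1)-1)*(2*(n+1)-1) = (2*n+1)*(2*j+1)" by simp
    thus ?thesis by (simp only: power_mult) simp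
  qed
  have "(f has_sum ((ln (EE t 1) - ln (EE t (-1)))/2)) UNIV \<longleftrightarrow>
        ((\<lambda>(r::nat,k::nat). t^((2*r-1)*(2*k-1)) / real (2*r-1)) has_sum ((ln (EE t 1) - ln (EE t (-1)))/2)) ({1..}\<times>{1..})"
    apply (rule has_sum_reindex_bij_witness[where i="\<lambda>(r,k). (k-1, r-1)" and j="\<lambda>(n,j). (j+1, n+1)"])
    apply (auto simp: split_beta)[4]
    apply (simp only: split_beta fst_conv snd_conv f_def pe)
    apply simp
    done
  with fh show ?thesis by simp
qed



lemma thL:
  fixes t :: real
  assumes t: "0 < t" "t < 1"
  shows "th t 0 > 0" "th4 t > 0" "2 * (ln (EE t 1) - ln (EE t (-1))) = ln (th t 0) - ln (th4 t)"
proof -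
  have S: "SS t 0 \<ge> 1" by (rule SS0_pos[OF t])
  have a: "EE t 1 * EE t 1 = SS t 0 * th t 0" by (rule EE1_sq[OF t])
  have b: "EE t (-1) * EE t (-1) = SS t 0 * th4 t" by (rule EEm1_sq[OF t])
  have p1: "EE t 1 > 0" by (rule EE1_pos[OF t])
  have p2: "EE t (-1) > 0" by (rule EEm1_pos[OF t])
  have "SS t 0 * th t 0 > 0" using a p1 by (metis mult_pos_pos)
  thus t0: "th t 0 > 0" using S by (simp add: zero_less_mult_iff)
  have "SS t 0 * th4 t > 0" using b p2 by (metis mult_pos_pos)
  thus t4: "th4 t > 0" using S by (simp add: zero_less_mult_iff)
  have "ln (EE t 1 * EE t 1) = ln (SS t 0 * th t 0)" using a by simp
  hence e1: "2 * ln (EE t 1) = ln (SS t 0) + ln (th t 0)" using p1 t0 S by (simp add: ln_mult_pos)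
  have "ln (EE t (-1) * EE t (-1)) = ln (SS t 0 * th4 t)" using b by simp
  hence e2: "2 * ln (EE t (-1)) = ln (SS t 0) + ln (th4 t)" using p2 t4 S by (simp add: ln_mult_pos)
  show "2 * (ln (EE t 1) - ln (EE t (-1))) = ln (th t 0) - ln (th4 t)" using e1 e2 by simp
qed

lemma th_half_pos:
  fixes t :: real
  assumes t: "0 < t" "t < 1"
  shows "th t (1/2) > 0"
proof -
  have "sum (\<lambda>n::int. t powr ((real_of_int n + 1/2)^2)) {0} \<le> th t (1/2)"
    by (rule finite_sum_le_has_sum[OF th_has_sum[OF t]]) auto
  moreover have "sum (\<lambda>n::int. t powr ((real_of_int n + 1/2)^2)) {0} > 0" using t by simp
  ultimately show ?thesis by linarith
qed

lemma poch2: "pochhammer (2::real) n = fact (Suc n)"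
  using pochhammer_rec[of "1::real" n] pochhammer_fact[of "Suc n", where 'a=real] by simp

lemma poch32: "pochhammer (3/2::real) n = pochhammer (1/2) n * (2 * real n + 1)"
proof -
  have "pochhammer (1/2::real) (Suc n) = 1/2 * pochhammer (3/2) n"
    using pochhammer_rec[of "1/2::real" n] by simp
  moreover have "pochhammer (1/2::real) (Suc n) = (1/2 + real n) * pochhammer (1/2) n"
    using pochhammer_rec'[of "1/2::real" n] by simp
  ultimately show ?thesis by (simp add: algebra_simps)
qed

lemma cancel1: "(F::real) \<noteq> 0 \<Longrightarrow> c \<noteq> 0 \<Longrightarrow> F * F / (c * F) * w / F = w / c"
  by (simp add: field_simps)
lemma cancel2: "(P::real) \<noteq> 0 \<Longrightarrow> F \<noteq> 0 \<Longrightarrow> c \<noteq> 0 \<Longrightarrow> P * F / (P * c) * w / F = w / c"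
  by (simp add: field_simps)

lemma hyp1:
  fixes z :: real
  assumes z: "0 < z" "z < 1"
  shows "z * hyp2F1 1 1 2 z = - ln (1 - z)"
proof -
  have tm: "pochhammer 1 n * pochhammer 1 n / pochhammer 2 n * z^n / fact n = z^n / real (Suc n)" for n
    by (simp only: poch2 pochhammer_fact[symmetric] fact_Suc, rule cancel1) auto
  have "(\<lambda>n. - ((-(-z))^n) / of_nat n) sums ln (1 + (-z))" using z by (intro ln_series') auto
  hence "(\<lambda>n. - (z^n) / real n) sums ln (1 - z)" by simp
  hence "(\<lambda>n. - (z^(Suc n)) / real (Suc n)) sums ln (1 - z)" by (subst sums_Suc_iff) simp
  hence "(\<lambda>n. - (- (z^(Suc n)) / real (Suc n))) sums (- ln (1 - z))" by (rule sums_minus)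
  hence "(\<lambda>n. z * (z^n / real (Suc n))) sums (- ln (1 - z))" by simp
  moreover have "(\<lambda>n. z * (z^n / real (Suc n))) sums (z * hyp2F1 1 1 2 z)"
  proof -
    have "summable (\<lambda>n. z^n / real (Suc n))"
      using \<open>(\<lambda>n. z * (z^n / real (Suc n))) sums (- ln (1 - z))\<close> z
      by (metis (no_types) sums_summable summable_mult_D less_irrefl)
    thus ?thesis unfolding hyp2F1_def tm by (intro sums_mult summable_sums)
  qed
  ultimately show ?thesis using sums_unique2 by blast
qed

lemma hyp2:
  fixes u :: real
  assumes u: "0 < u" "u < 1"
  shows "u * hyp2F1 (1/2) 1 (3/2) (u^2) = (ln (1+u) - ln (1-u)) / 2"
proof -
  have pp: "pochhammer (1/2::real) n > 0" for n by (rule pochhammer_pos) simp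
  have tm: "pochhammer (1/2) n * pochhammer 1 n / pochhammer (3/2) n * (u^2)^n / fact n = (u^2)^n / (2 * real n + 1)" for n
    using pp[of n] by (simp only: poch32 pochhammer_fact[symmetric], intro cancel2) auto
  have s: "(\<lambda>j. u^(2*j+1) / real (2*j+1)) sums ((ln (1+u) - ln (1-u)) / 2)"
    using artanh_sums[of u] u by simp
  have e: "u * ((u^2)^n / (2 * real n + 1)) = u^(2*n+1) / real (2*n+1)" for n
    by (simp add: power_mult[symmetric] mult.commute)
  have "summable (\<lambda>n. (u^2)^n / (2 * real n + 1))"
  proof -
    have "summable (\<lambda>n. u * ((u^2)^n / (2 * real n + 1)))" unfolding e using s by (simp add: sums_iff)
    thus ?thesis using u summable_mult_D by (metis less_irrefl)
  qed
  hence "(\<lambda>n. u * ((u^2)^n / (2 * real n + 1))) sums (u * hyp2F1 (1/2) 1 (3/2) (u^2))"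
    unfolding hyp2F1_def tm by (intro sums_mult summable_sums)
  thus ?thesis using s unfolding e using sums_unique2 by blast
qed



theorem mainTheorem10:
  fixes q :: real
  assumes "0 < q" and "q < 1"
  shows "((\<lambda>(r::nat, k::nat). q ^ ((2*r - 1) * (2*k - 1)) / real (2*r - 1))
            has_sum (alpha q / 16 * hyp2F1 1 1 2 (alpha q))) ({1..} \<times> {1..})
       \<and> alpha q / 16 * hyp2F1 1 1 2 (alpha q) = - (1/16) * ln (1 - alpha q)
       \<and> ((\<lambda>(r::nat, k::nat). q powr (2 * (real r - 1/2) * (real k - 1/2)) / real (2*r - 1))
            has_sum (sqrt (alpha q) / 4 * hyp2F1 (1/2) 1 (3/2) (alpha q))) ({1..} \<times> {1..})"
proof -
  note q = assms
  define A2 where "A2 = th q (1/2)"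
  define A3 where "A3 = th q 0"
  define A4 where "A4 = th4 q"
  define L where "L t = ln (EE t 1) - ln (EE t (-1))" for t
  have a2: "A2 > 0" unfolding A2_def by (rule th_half_pos[OF q])
  have a3: "A3 > 0" unfolding A3_def by (rule thL(1)[OF q])
  have a4: "A4 > 0" unfolding A4_def by (rule thL(2)[OF q])
  have Lq: "2 * L q = ln A3 - ln A4" unfolding L_def A3_def A4_def by (rule thL(3)[OF q])
  have d1: "A3^2 = th (q^2) 0 ^ 2 + th (q^2) (1/2) ^ 2" unfolding A3_def by (rule dup1[OF q])
  have d2: "A4^2 = th (q^2) 0 ^ 2 - th (q^2) (1/2) ^ 2" unfolding A4_def by (rule dup2[OF q])
  have d3: "A2^2 = 2 * th (q^2) (1/2) * th (q^2) 0" unfolding A2_def by (rule dup3[OF q])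
  have p4: "x^4 = (x^2)^2" for x :: real by (simp add: power_mult[symmetric])
  have jac: "A3^4 = A2^4 + A4^4"
    unfolding p4 d1 d2 d3 by (simp add: power2_eq_square algebra_simps)
  have al: "alpha q = A2^4 / A3^4" by (simp add: alpha_def theta2_th theta3_th A2_def A3_def)
  have a34: "A3^4 \<noteq> 0" using a3 by simp
  have al1: "1 - alpha q = A4^4 / A3^4"
  proof -
    have "1 - alpha q = (A3^4 - A2^4) / A3^4" unfolding al using a34 by (simp add: field_simps)
    also have "A3^4 - A2^4 = A4^4" using jac by simp
    finally show ?thesis .
  qed
  have alpos: "0 < alpha q" unfolding al using a2 a3 by simp
  have "A4^4 / A3^4 > 0" using a3 a4 by simp
  hence allt: "alpha q < 1" using al1 by linarith
  have E2: "alpha q / 16 * hyp2F1 1 1 2 (alpha q) = - (1/16) * ln (1 - alpha q)"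
    using hyp1[OF alpos allt] by simp
  have v1: "- (1/16) * ln (1 - alpha q) = L q / 2"
  proof -
    have "ln (1 - alpha q) = 4 * ln A4 - 4 * ln A3"
      unfolding al1 using a3 a4 by (simp add: ln_divide_pos ln_realpow)
    moreover have "L q = (ln A3 - ln A4) / 2" using Lq by simp
    ultimately show ?thesis by (simp add: algebra_simps)
  qed
  have P1: "((\<lambda>(r::nat, k::nat). q ^ ((2*r - 1) * (2*k - 1)) / real (2*r - 1))
            has_sum (alpha q / 16 * hyp2F1 1 1 2 (alpha q))) ({1..} \<times> {1..})"
    unfolding E2 v1 L_def by (rule DS[OF q])
  define s where "s = sqrt q"
  have s: "0 < s" "s < 1" using q by (auto simp: s_def)
  have s2: "s^2 = q" using q by (simp add: s_def)
  have e1: "th s 0 ^ 2 = A3^2 + A2^2" using dup1[OF s] unfolding s2 A2_def A3_def .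
  have e2: "th4 s ^ 2 = A3^2 - A2^2" using dup2[OF s] unfolding s2 A2_def A3_def .
  have ts0: "th s 0 > 0" by (rule thL(1)[OF s])
  have ts4: "th4 s > 0" by (rule thL(2)[OF s])
  have Ls: "2 * L s = ln (th s 0) - ln (th4 s)" unfolding L_def by (rule thL(3)[OF s])
  define u where "u = A2^2 / A3^2"
  have alu: "alpha q = u^2" unfolding al u_def by (simp only: power_divide p4)
  have u: "0 < u" "u < 1"
  proof -
    show "0 < u" unfolding u_def using a2 a3 by simp
    have "u^2 < 1" using allt alu by simp
    hence "u^2 < 1^2" by simp
    thus "u < 1" by (rule power_less_imp_less_base) simp
  qed
  have squ: "sqrt (alpha q) = u" unfolding alu using u by simp
  have up: "1 + u = th s 0 ^ 2 / A3^2" unfolding e1 u_def using a3 by (simp add: field_simps)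
  have um: "1 - u = th4 s ^ 2 / A3^2" unfolding e2 u_def using a3 by (simp add: field_simps)
  have v2: "sqrt (alpha q) / 4 * hyp2F1 (1/2) 1 (3/2) (alpha q) = L s / 2"
  proof -
    have "sqrt (alpha q) / 4 * hyp2F1 (1/2) 1 (3/2) (alpha q) = (u * hyp2F1 (1/2) 1 (3/2) (u^2)) / 4"
      unfolding squ using u by (simp add: alu)
    also have "\<dots> = (ln (1+u) - ln (1-u)) / 8" unfolding hyp2[OF u] by simp
    also have "ln (1+u) - ln (1-u) = 2 * ln (th s 0) - 2 * ln (th4 s)"
      unfolding up um using a3 ts0 ts4 by (simp add: ln_divide_pos ln_realpow)
    finally show ?thesis using Ls by simp
  qed
  have DSs: "((\<lambda>(r::nat,k::nat). s^((2*r-1)*(2*k-1)) / real (2*r-1)) has_sum (L s / 2)) ({1..}\<times>{1..})"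
    unfolding L_def by (rule DS[OF s])
  have cong: "(\<lambda>(r::nat,k::nat). s^((2*r-1)*(2*k-1)) / real (2*r-1)) z
            = (\<lambda>(r::nat, k::nat). q powr (2 * (real r - 1/2) * (real k - 1/2)) / real (2*r - 1)) z"
    if zin: "z \<in> {1..}\<times>{1..}" for z
  proof -
    obtain r k where z: "z = (r,k)" "r \<ge> 1" "k \<ge> 1" using zin by (cases z) auto
    have sp: "s = q powr (1/2)" using q by (simp add: s_def powr_half_sqrt)
    have "s^((2*r-1)*(2*k-1)) = s powr (real ((2*r-1)*(2*k-1)))" using powr_realpow[OF s(1), of "(2*r-1)*(2*k-1)"] by (simp only:)
    also have "\<dots> = q powr (1/2 * real ((2*r-1)*(2*k-1)))" unfolding sp by (simp add: powr_powr)
    also have "1/2 * real ((2*r-1)*(2*k-1)) = 2 * (real r - 1/2) * (real k - 1/2)"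
    proof -
      have r1: "real (2*r-1) = 2 * real r - 1" using z by (simp add: of_nat_diff)
      have k1: "real (2*k-1) = 2 * real k - 1" using z by (simp add: of_nat_diff)
      show ?thesis by (simp only: of_nat_mult r1 k1) (simp add: algebra_simps)
    qed
    finally show ?thesis using z by simp
  qed
  have P2: "((\<lambda>(r::nat, k::nat). q powr (2 * (real r - 1/2) * (real k - 1/2)) / real (2*r - 1))
            has_sum (sqrt (alpha q) / 4 * hyp2F1 (1/2) 1 (3/2) (alpha q))) ({1..} \<times> {1..})"
  proof -
    have eqv: "((\<lambda>(r::nat,k::nat). s^((2*r-1)*(2*k-1)) / real (2*r-1)) has_sum (L s / 2)) ({1..}\<times>{1..})
       \<longleftrightarrow> ((\<lambda>(r::nat, k::nat). q powr (2 * (real r - 1/2) * (real k - 1/2)) / real (2*r - 1)) has_sum (L s / 2)) ({1..}\<times>{1..})"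
      by (rule has_sum_cong) (rule cong)
    show ?thesis unfolding v2 by (rule iffD1[OF eqv DSs])
  qed
  show ?thesis using P1 E2 P2 by blast
qed


end
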